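(* Let $G$ be a finite simple graph of order $n$ whose odd girth is $2k+1$ for some integer $k\geq 1$. Then $\mathrm{es}_{\Delta}(G)\leq \frac{k+1}{2k+1}\,n$.
   Context: The odd girth of $G$ is the length of a shortest odd cycle in $G$. $\mathrm{es}_{\Delta}(G)$ is the minimum number of edges of $G$ whose removal results in a subgraph with maximum degree $\Delta(G)-1$. *)

theory Defs
  imports Complex_Main
begin

definition simple_graph :: "'a set \<Rightarrow> 'a set set \<Rightarrow> bool" where
  "simple_graph V E \<longleftrightarrow> finite V \<and>
     (\<forall>e\<in>E. \<exists>u v. e = {u, v} \<and> u \<noteq> v \<and> u \<in> V \<and> v \<in> V)"

definition degree :: "'a set set \<Rightarrow> 'a \<Rightarrow> nat" where
  "degree E v = card {e\<in>E. v \<in> e}"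

definition max_degree :: "'a set \<Rightarrow> 'a set set \<Rightarrow> nat" where
  "max_degree V E = (if V = {} then 0 else Max (degree E ` V))"

definition is_cycle :: "'a set set \<Rightarrow> 'a list \<Rightarrow> bool" where
  "is_cycle E cs \<longleftrightarrow> length cs \<ge> 3 \<and> distinct cs \<and>
     (\<forall>i < length cs. {cs ! i, cs ! ((i + 1) mod length cs)} \<in> E)"

definition has_odd_cycle :: "'a set set \<Rightarrow> bool" where
  "has_odd_cycle E \<longleftrightarrow> (\<exists>cs. is_cycle E cs \<and> odd (length cs))"

text \<open>Odd girth: length of a shortest odd cycle (meaningful when an odd cycle exists).\<close>
definition odd_girth :: "'a set set \<Rightarrow> nat" where
  "odd_girth E = (LEAST l. \<exists>cs. is_cycle E cs \<and> odd (length cs) \<and> length cs = l)"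

definition es_Delta :: "'a set \<Rightarrow> 'a set set \<Rightarrow> nat" where
  "es_Delta V E = Min {card F | F. F \<subseteq> E \<and> max_degree V (E - F) = max_degree V E - 1}"

end

theory Submission
  imports Defs
begin

lemma hall:
  fixes N :: "'x \<Rightarrow> 'y set"
  assumes "finite A" "\<forall>x\<in>A. finite (N x)" "\<forall>X\<subseteq>A. card X \<le> card (\<Union>(N ` X))"
  shows "\<exists>f. inj_on f A \<and> (\<forall>x\<in>A. f x \<in> N x)"
  using assms
proof (induction "card A" arbitrary: A N rule: less_induct)
  case less
  show ?case
  proof (cases "A = {}")
    case True then show ?thesis by auto
  next
    case Ane: False
    show ?thesis
    proof (cases "\<exists>X. X \<subseteq> A \<and> X \<noteq> {} \<and> X \<noteq> A \<and> card (\<Union>(N ` X)) \<le> card X")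
      case True
      then obtain X where X: "X \<subseteq> A" "X \<noteq> {}" "X \<noteq> A" "card (\<Union>(N ` X)) \<le> card X" by blast
      have fX: "finite X" using X(1) less.prems(1) finite_subset by blast
      have cX: "card X < card A" using X(1,3) less.prems(1) by (intro psubset_card_mono) auto
      have h1: "\<forall>Y\<subseteq>X. card Y \<le> card (\<Union>(N ` Y))" using less.prems(3) X(1) by auto
      have fin1: "\<forall>x\<in>X. finite (N x)" using less.prems(2) X(1) by blast
      obtain f1 where f1: "inj_on f1 X" "\<forall>x\<in>X. f1 x \<in> N x"
        using less.hyps[OF cX fX fin1 h1] by blast
      define NX where "NX = \<Union>(N ` X)"
      define N2 where "N2 = (\<lambda>x. N x - NX)"
      have cA2: "card (A - X) < card A" using X(1,2) less.prems(1)
        by (intro psubset_card_mono) auto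
      have h2: "\<forall>Y\<subseteq>A-X. card Y \<le> card (\<Union>(N2 ` Y))"
      proof (intro allI impI)
        fix Y assume Y: "Y \<subseteq> A - X"
        have fY: "finite Y" using Y less.prems(1) finite_subset by blast
        have YX: "Y \<union> X \<subseteq> A" using Y X(1) by auto
        have "card (Y \<union> X) \<le> card (\<Union>(N ` (Y \<union> X)))" using less.prems(3) YX by blast
        also have "\<Union>(N ` (Y \<union> X)) = \<Union>(N2 ` Y) \<union> NX" by (auto simp: N2_def NX_def)
        also have "card (\<Union>(N2 ` Y) \<union> NX) \<le> card (\<Union>(N2 ` Y)) + card NX" by (rule card_Un_le)
        finally have "card (Y \<union> X) \<le> card (\<Union>(N2 ` Y)) + card NX" .
        moreover have "card (Y \<union> X) = card Y + card X" using Y fY fX by (subst card_Un_disjoint) auto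
        moreover have "card NX \<le> card X" using X(4) NX_def by simp
        ultimately show "card Y \<le> card (\<Union>(N2 ` Y))" by linarith
      qed
      have fin2: "\<forall>x\<in>A-X. finite (N2 x)" using less.prems(2) N2_def by auto
      obtain f2 where f2: "inj_on f2 (A - X)" "\<forall>x\<in>A-X. f2 x \<in> N2 x"
        using less.hyps[OF cA2 _ fin2 h2] less.prems(1) by auto
      define f where "f = (\<lambda>x. if x \<in> X then f1 x else f2 x)"
      have "inj_on f A"
        unfolding inj_on_def
      proof (intro ballI impI)
        fix x y assume xy: "x \<in> A" "y \<in> A" "f x = f y"
        show "x = y"
        proof (cases "x \<in> X"; cases "y \<in> X")
          assume "x \<in> X" "y \<in> X" then show ?thesis using xy f1 by (auto simp: f_def inj_on_def)
        next
          assume "x \<notin> X" "y \<notin> X" then show ?thesis using xy f2 by (auto simp: f_def inj_on_def)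
        next
          assume a: "x \<in> X" "y \<notin> X"
          have "f x \<in> NX" using a f1 NX_def f_def by auto
          moreover have "f y \<notin> NX" using a xy f2 N2_def f_def by auto
          ultimately show ?thesis using xy by simp
        next
          assume a: "x \<notin> X" "y \<in> X"
          have "f y \<in> NX" using a f1 NX_def f_def by auto
          moreover have "f x \<notin> NX" using a(1) xy(1) f2(2) N2_def f_def by auto
          ultimately show ?thesis using xy by simp
        qed
      qed
      moreover have "\<forall>x\<in>A. f x \<in> N x" using f1 f2 N2_def f_def by auto
      ultimately show ?thesis by blast
    next
      case False
      then have strict: "\<And>X. X \<subseteq> A \<Longrightarrow> X \<noteq> {} \<Longrightarrow> X \<noteq> A \<Longrightarrow> card X < card (\<Union>(N ` X))"
        by (meson False not_le)
      obtain a where a: "a \<in> A" using Ane by blast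
      have "{a} \<subseteq> A" using a by simp
      then have "card {a} \<le> card (\<Union>(N ` {a}))" using less.prems(3) by blast
      then have "N a \<noteq> {}" by (cases "N a = {}") simp_all
      then obtain y where y: "y \<in> N a" by blast
      define N' where "N' = (\<lambda>x. N x - {y})"
      have cA: "card (A - {a}) < card A" using a less.prems(1)
        by (simp only: card_Diff1_less_iff)
      have h: "\<forall>X\<subseteq>A - {a}. card X \<le> card (\<Union>(N' ` X))"
      proof (intro allI impI)
        fix X assume X: "X \<subseteq> A - {a}"
        show "card X \<le> card (\<Union>(N' ` X))"
        proof (cases "X = {}")
          case True then show ?thesis by simp
        next
          case False
          have fX: "finite X" using X less.prems(1) finite_subset by blast
          have "card X < card (\<Union>(N ` X))" using strict[of X] X False a by auto
          moreover have "\<Union>(N ` X) \<subseteq> \<Union>(N' ` X) \<union> {y}" by (auto simp: N'_def)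
          moreover have "finite (\<Union>(N' ` X) \<union> {y})" using fX X less.prems(2) N'_def by auto
          ultimately have "card X < card (\<Union>(N' ` X) \<union> {y})"
            by (meson card_mono order_less_le_trans)
          also have "\<dots> \<le> card (\<Union>(N' ` X)) + 1" using card_Un_le[of "\<Union>(N' ` X)" "{y}"] by simp
          finally show ?thesis by simp
        qed
      qed
      have fin': "\<forall>x\<in>A-{a}. finite (N' x)" using less.prems(2) N'_def by auto
      obtain f' where f': "inj_on f' (A - {a})" "\<forall>x\<in>A-{a}. f' x \<in> N' x"
        using less.hyps[OF cA _ fin' h] less.prems(1) by auto
      define f where "f = f'(a := y)"
      have "inj_on f A"
        unfolding inj_on_def
      proof (intro ballI impI)
        fix x z assume xz: "x \<in> A" "z \<in> A" "f x = f z"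
        show "x = z"
        proof (cases "x = a"; cases "z = a")
          assume "x \<noteq> a" "z \<noteq> a" then show ?thesis using xz f'(1) unfolding f_def inj_on_def by auto
        next
          assume "x = a" "z \<noteq> a" then show ?thesis using xz f'(2) unfolding f_def N'_def by auto
        next
          assume "x \<noteq> a" "z = a" then show ?thesis using xz f'(2) unfolding f_def N'_def by auto
        qed simp
      qed
      moreover have "\<forall>x\<in>A. f x \<in> N x" using f' y N'_def f_def by auto
      ultimately show ?thesis by blast
    qed
  qed
qed

lemma regular_match:
  fixes w :: "'x \<Rightarrow> 'x \<Rightarrow> nat"
  assumes fA: "finite A" and d: "d > 0" and row: "\<forall>x\<in>A. (\<Sum>y\<in>A. w x y) = d"
    and col: "\<forall>y\<in>A. (\<Sum>x\<in>A. w x y) \<le> d"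
  shows "\<exists>f. inj_on f A \<and> (\<forall>x\<in>A. f x \<in> A \<and> w x (f x) > 0)"
proof -
  define N where "N = (\<lambda>x. {y\<in>A. w x y > 0})"
  have finN: "\<forall>x\<in>A. finite (N x)" using fA N_def by auto
  have hc: "\<forall>X\<subseteq>A. card X \<le> card (\<Union>(N ` X))"
  proof (intro allI impI)
    fix X assume X: "X \<subseteq> A"
    define NX where "NX = \<Union>(N ` X)"
    have NXA: "NX \<subseteq> A" using NX_def N_def by auto
    have fX: "finite X" using X fA finite_subset by blast
    have fNX: "finite NX" using NXA fA finite_subset by blast
    have "d * card X = (\<Sum>x\<in>X. d)" by simp
    also have "\<dots> = (\<Sum>x\<in>X. \<Sum>y\<in>A. w x y)" using row X by (intro sum.cong) auto
    also have "\<dots> = (\<Sum>x\<in>X. \<Sum>y\<in>NX. w x y)"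
    proof (rule sum.cong[OF refl])
      fix x assume x: "x \<in> X"
      show "(\<Sum>y\<in>A. w x y) = (\<Sum>y\<in>NX. w x y)"
        by (rule sum.mono_neutral_right[OF fA NXA]) (use x in \<open>auto simp: NX_def N_def\<close>)
    qed
    also have "\<dots> = (\<Sum>y\<in>NX. \<Sum>x\<in>X. w x y)" by (rule sum.swap)
    also have "\<dots> \<le> (\<Sum>y\<in>NX. \<Sum>x\<in>A. w x y)"
      by (intro sum_mono sum_mono2[OF fA X]) auto
    also have "\<dots> \<le> (\<Sum>y\<in>NX. d)" using col NXA by (intro sum_mono) auto
    also have "\<dots> = d * card NX" by simp
    finally have "d * card X \<le> d * card NX" .
    then show "card X \<le> card (\<Union>(N ` X))" using d NX_def by simp
  qed
  obtain f where "inj_on f A" "\<forall>x\<in>A. f x \<in> N x" using hall[OF fA finN hc] by blast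
  then show ?thesis using N_def by auto
qed

lemma funpow_in:
  assumes "\<forall>x\<in>D. f x \<in> D" "v \<in> D" shows "(f ^^ i) v \<in> D"
  using assms by (induction i) auto

lemma funpow_inj:
  assumes inj: "inj_on f D" and cl: "\<forall>x\<in>D. f x \<in> D"
  shows "x \<in> D \<Longrightarrow> y \<in> D \<Longrightarrow> (f ^^ i) x = (f ^^ i) y \<Longrightarrow> x = y"
proof (induction i)
  case 0 then show ?case by simp
next
  case (Suc i)
  have a: "(f ^^ i) x \<in> D" by (rule funpow_in[OF cl Suc.prems(1)])
  have b: "(f ^^ i) y \<in> D" by (rule funpow_in[OF cl Suc.prems(2)])
  have "f ((f ^^ i) x) = f ((f ^^ i) y)" using Suc.prems(3) by simp
  then have "(f ^^ i) x = (f ^^ i) y" using inj a b by (simp add: inj_on_eq_iff)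
  then show ?case using Suc.IH Suc.prems(1,2) by simp
qed

lemma arith_cyc:
  fixes k L :: nat
  assumes "even L \<or> 2*k+1 \<le> L"
  shows "(2*k+1) * ((L+1) div 2) \<le> (k+1) * L"
proof (cases "even L")
  case True
  then obtain m where m: "L = 2*m" by blast
  then have "(L+1) div 2 = m" by simp
  then show ?thesis using m by (simp add: algebra_simps)
next
  case False
  then obtain m where m: "L = 2*m+1" using oddE by blast
  then have km: "k \<le> m" using assms False by simp
  have "(L+1) div 2 = m + 1" using m by simp
  moreover have "(2*k+1) * (m+1) \<le> (k+1) * (2*m+1)" using km by (simp add: algebra_simps)
  ultimately show ?thesis using m by simp
qed


lemma noloop:
  assumes "\<forall>e\<in>E. \<exists>u v. e = {u, v} \<and> u \<noteq> v"
  shows "{v, v} \<notin> E"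
  using assms by force

lemma cover_from_inj:
  assumes sg: "\<forall>e\<in>E. \<exists>u v. e = {u, v} \<and> u \<noteq> v"
    and og: "\<forall>cs. is_cycle E cs \<and> odd (length cs) \<longrightarrow> 2*k+1 \<le> length cs"
  shows "finite D \<Longrightarrow> inj_on \<sigma> D \<Longrightarrow> \<forall>v\<in>D. {v, \<sigma> v} \<in> E \<Longrightarrow>
    \<exists>F. F \<subseteq> E \<and> finite F \<and> (\<forall>x\<in>D \<inter> \<sigma> ` D. \<exists>e\<in>F. x \<in> e) \<and> (2*k+1) * card F \<le> (k+1) * card D"
proof (induction "card D" arbitrary: D rule: less_induct)
  case less
  note fD = less.prems(1) and inj = less.prems(2) and ed = less.prems(3)
  have ne: "\<And>v. v \<in> D \<Longrightarrow> \<sigma> v \<noteq> v" using ed noloop[OF sg] by metis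
  show ?case
  proof (cases "D = {}")
    case True
    then show ?thesis by (intro exI[of _ "{}"]) auto
  next
    case Dne: False
    show ?thesis
    proof (cases "\<exists>v\<in>D. v \<notin> \<sigma> ` D")
      case True
      then obtain v where v: "v \<in> D" "v \<notin> \<sigma> ` D" by blast
      define u where "u = \<sigma> v"
      show ?thesis
      proof (cases "u \<in> D")
        case False
        define D' where "D' = D - {v}"
        have c: "card D' < card D" unfolding D'_def by (rule card_Diff1_less[OF fD v(1)])
        have "finite D'" "inj_on \<sigma> D'" "\<forall>x\<in>D'. {x, \<sigma> x} \<in> E" 
          using fD ed inj_on_subset[OF inj, of D'] unfolding D'_def by auto
        from less.hyps[OF c this] obtain F where F: "F \<subseteq> E" "finite F"
          "\<forall>x\<in>D' \<inter> \<sigma> ` D'. \<exists>e\<in>F. x \<in> e" "(2*k+1) * card F \<le> (k+1) * card D'" by blast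
        have cov: "\<forall>x\<in>D \<inter> \<sigma> ` D. \<exists>e\<in>F. x \<in> e"
        proof
          fix x assume x: "x \<in> D \<inter> \<sigma> ` D"
          then obtain y where y: "y \<in> D" "x = \<sigma> y" by blast
          have "x \<noteq> v" using x v by blast
          moreover have "y \<noteq> v" using y False u_def x by blast
          ultimately have "y \<in> D'" "x \<in> D'" using x y(1) D'_def by auto
          then have "x \<in> D' \<inter> \<sigma> ` D'" using y(2) by auto
          then show "\<exists>e\<in>F. x \<in> e" using F(3) by blast
        qed
        have "(2*k+1) * card F \<le> (k+1) * card D" using F(4) c
          by (meson less_imp_le_nat mult_le_mono2 order_trans)
        then show ?thesis using F cov by blast
      next
        case True
        have uv: "u \<noteq> v" using ne v(1) u_def by simp
        define D' where "D' = D - {v, u}"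
        have "card {v, u} \<le> card D" using fD v(1) True by (intro card_mono) auto
        then have cD: "card D = card D' + 2" using D'_def fD v(1) True uv
          by (simp add: card_Diff_subset)
        have c: "card D' < card D" using cD by simp
        have "finite D'" "inj_on \<sigma> D'" "\<forall>x\<in>D'. {x, \<sigma> x} \<in> E" 
          using fD ed inj_on_subset[OF inj, of D'] unfolding D'_def by auto
        from less.hyps[OF c this] obtain F where F: "F \<subseteq> E" "finite F"
          "\<forall>x\<in>D' \<inter> \<sigma> ` D'. \<exists>e\<in>F. x \<in> e" "(2*k+1) * card F \<le> (k+1) * card D'" by blast
        define F2 where "F2 = insert {u, \<sigma> u} F"
        have F2E: "F2 \<subseteq> E" using F(1) ed True F2_def by auto
        have cF2: "card F2 \<le> card F + 1" using F(2) F2_def by (simp add: card_insert_if)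
        have cov: "\<forall>x\<in>D \<inter> \<sigma> ` D. \<exists>e\<in>F2. x \<in> e"
        proof
          fix x assume x: "x \<in> D \<inter> \<sigma> ` D"
          show "\<exists>e\<in>F2. x \<in> e"
          proof (cases "x = u \<or> x = \<sigma> u")
            case True then show ?thesis using F2_def by auto
          next
            case False
            then obtain y where y: "y \<in> D" "x = \<sigma> y" using x by blast
            have "x \<noteq> v" using x v by blast
            moreover have "y \<noteq> v" using y False u_def by blast
            moreover have "y \<noteq> u" using y False by blast
            ultimately have "y \<in> D'" "x \<in> D'" using x y(1) D'_def False by auto
            then have "x \<in> D' \<inter> \<sigma> ` D'" using y(2) by auto
            then show ?thesis using F(3) F2_def by blast
          qed
        qed
        have "(2*k+1) * card F2 \<le> (2*k+1) * (card F + 1)" by (rule mult_le_mono2[OF cF2])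
        also have "\<dots> = (2*k+1) * card F + (2*k+1)" by simp
        also have "\<dots> \<le> (k+1) * card D' + (k+1) * 2"
          by (rule add_le_mono[OF F(4)]) simp
        also have "\<dots> = (k+1) * card D" using cD by (simp add: algebra_simps)
        finally have bnd: "(2*k+1) * card F2 \<le> (k+1) * card D" .
        have fF2: "finite F2" using F(2) F2_def by simp
        show ?thesis using F2E fF2 cov bnd by blast
      qed
    next
      case False
      then have DsD: "D \<subseteq> \<sigma> ` D" by blast
      have "card (\<sigma> ` D) = card D" using inj by (simp add: card_image)
      then have sDD: "\<sigma> ` D = D" using DsD fD by (metis card_subset_eq finite_imageI)
      then have cl: "\<forall>x\<in>D. \<sigma> x \<in> D" by blast
      obtain v where v: "v \<in> D" using Dne by blast
      define g where "g = (\<lambda>i. (\<sigma> ^^ i) v)"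
      have gD: "\<And>i. g i \<in> D" using funpow_in[OF cl v] g_def by blast
      have "\<not> inj_on g {..card D}"
      proof
        assume "inj_on g {..card D}"
        then have "card {..card D} \<le> card D" using gD fD by (intro card_inj_on_le) auto
        then show False by simp
      qed
      then obtain i j where ij: "i \<noteq> j" "g i = g j" unfolding inj_on_def by blast
      have "\<exists>L>0. (\<sigma> ^^ L) v = v"
      proof -
        have "\<exists>a b. a < b \<and> g a = g b" using ij by (metis linorder_neqE_nat)
        then obtain a b where ab: "a < b" "g a = g b" by blast
        have "(\<sigma> ^^ a) ((\<sigma> ^^ (b - a)) v) = (\<sigma> ^^ a) v"
          
          proof -
            have "(\<sigma> ^^ (a + (b - a))) v = (\<sigma> ^^ a) ((\<sigma> ^^ (b - a)) v)" by (simp only: funpow_add o_apply)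
            moreover have "a + (b - a) = b" using ab by simp
            ultimately show ?thesis using ab g_def by simp
          qed
        then have "(\<sigma> ^^ (b - a)) v = v"
          by (rule funpow_inj[OF inj cl funpow_in[OF cl v] v])
        then show ?thesis using ab by (intro exI[of _ "b - a"]) auto
      qed
      define L where "L = (LEAST L. L > 0 \<and> (\<sigma> ^^ L) v = v)"
      have L: "L > 0" "(\<sigma> ^^ L) v = v"
        using LeastI_ex[OF \<open>\<exists>L>0. (\<sigma> ^^ L) v = v\<close>] L_def by auto
      have Lmin: "\<And>m. 0 < m \<Longrightarrow> m < L \<Longrightarrow> (\<sigma> ^^ m) v \<noteq> v"
        using not_less_Least L_def by blast
      have ginj: "inj_on g {..<L}"
      proof (rule inj_onI)
        fix a b assume a: "a \<in> {..<L}" and b: "b \<in> {..<L}" and e: "g a = g b"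
        show "a = b"
        proof (rule ccontr)
          assume "a \<noteq> b"
          then have "\<exists>a b. a < b \<and> b < L \<and> g a = g b" using a b e by (metis lessThan_iff linorder_neqE_nat)
          then obtain a b where ab: "a < b" "b < L" "g a = g b" by blast
          have "(\<sigma> ^^ a) ((\<sigma> ^^ (b - a)) v) = (\<sigma> ^^ a) v"
            
          proof -
            have "(\<sigma> ^^ (a + (b - a))) v = (\<sigma> ^^ a) ((\<sigma> ^^ (b - a)) v)" by (simp only: funpow_add o_apply)
            moreover have "a + (b - a) = b" using ab by simp
            ultimately show ?thesis using ab g_def by simp
          qed
          then have "(\<sigma> ^^ (b - a)) v = v"
            by (rule funpow_inj[OF inj cl funpow_in[OF cl v] v])
          then show False using Lmin[of "b - a"] ab by simp
        qed
      qed
      have gsuc: "\<And>i. g (Suc i) = \<sigma> (g i)" using g_def by simp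
      have gmod: "\<And>i. i < L \<Longrightarrow> g ((i + 1) mod L) = \<sigma> (g i)"
      proof -
        fix i assume i: "i < L"
        show "g ((i + 1) mod L) = \<sigma> (g i)"
        proof (cases "i + 1 < L")
          case True then show ?thesis using gsuc by simp
        next
          case False
          then have "i + 1 = L" using i by simp
          then show ?thesis using gsuc L(2) g_def by (metis Suc_eq_plus1 funpow_0 mod_self)
        qed
      qed
      define Orb where "Orb = g ` {..<L}"
      have cO: "card Orb = L" using ginj Orb_def by (simp add: card_image)
      have OD: "Orb \<subseteq> D" using gD Orb_def by auto
      have Ocl: "\<And>x. x \<in> Orb \<Longrightarrow> \<sigma> x \<in> Orb"
      proof -
        fix x assume "x \<in> Orb"
        then obtain i where i: "i < L" "x = g i" using Orb_def by auto
        then have "\<sigma> x = g ((i + 1) mod L)" using gmod by simp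
        moreover have "(i + 1) mod L < L" using L(1) by simp
        ultimately show "\<sigma> x \<in> Orb" using Orb_def by auto
      qed
      have Lne1: "L \<noteq> 1"
      proof
        assume "L = 1"
        then have "\<sigma> v = v" using L(2) by simp
        then show False using ne v by blast
      qed
      have Lcond: "even L \<or> 2*k+1 \<le> L"
      proof (cases "even L")
        case True then show ?thesis by simp
      next
        case False
        define cs where "cs = map g [0..<L]"
        have "is_cycle E cs"
          unfolding is_cycle_def
        proof (intro conjI allI impI)
          show "3 \<le> length cs" using cs_def L(1) Lne1 False by (simp; presburger)
          show "distinct cs" using cs_def ginj by (simp add: distinct_map atLeast0LessThan)
          fix i assume "i < length cs"
          then have i: "i < L" using cs_def by simp
          have "cs ! i = g i" using cs_def i by simp
          moreover have "cs ! ((i + 1) mod length cs) = \<sigma> (g i)"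
            using cs_def i gmod L(1) by simp
          ultimately show "{cs ! i, cs ! ((i + 1) mod length cs)} \<in> E" using ed gD by simp
        qed
        moreover have len: "length cs = L" using cs_def by simp
        ultimately have "2*k+1 \<le> length cs" using og[rule_format, of cs] False by simp
        then show ?thesis using cs_def by simp
      qed
      define D' where "D' = D - Orb"
      have fO: "finite Orb" using OD fD finite_subset by blast
      have "card D' = card D - card Orb" using D'_def card_Diff_subset[OF fO OD] by simp
      moreover have "card Orb \<le> card D" using card_mono[OF fD OD] .
      ultimately have cD: "card D = card D' + L" using cO by simp
      have c: "card D' < card D" using cD L(1) by simp
      have "finite D'" "inj_on \<sigma> D'" "\<forall>x\<in>D'. {x, \<sigma> x} \<in> E" 
        using fD ed inj_on_subset[OF inj, of D'] unfolding D'_def by auto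
      from less.hyps[OF c this] obtain F where F: "F \<subseteq> E" "finite F"
        "\<forall>x\<in>D' \<inter> \<sigma> ` D'. \<exists>e\<in>F. x \<in> e" "(2*k+1) * card F \<le> (k+1) * card D'" by blast
      define P where "P = (\<lambda>j. {g (2*j), g (2*j+1)}) ` {..<(L+1) div 2}"
      have PE: "P \<subseteq> E" using P_def ed gD gsuc by auto
      have cP: "card P \<le> (L+1) div 2" using P_def card_image_le[of "{..<(L+1) div 2}"] by simp
      define F2 where "F2 = F \<union> P"
      have fF2: "finite F2" using F(2) P_def F2_def by simp
      have cF2: "card F2 \<le> card F + (L+1) div 2" using cP F2_def card_Un_le[of F P] by simp
      have cov: "\<forall>x\<in>D \<inter> \<sigma> ` D. \<exists>e\<in>F2. x \<in> e"
      proof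
        fix x assume x: "x \<in> D \<inter> \<sigma> ` D"
        show "\<exists>e\<in>F2. x \<in> e"
        proof (cases "x \<in> Orb")
          case True
          then obtain i where i: "i < L" "x = g i" using Orb_def by auto
          have "i div 2 < (L+1) div 2" using i(1) by simp
          moreover have "x \<in> {g (2*(i div 2)), g (2*(i div 2)+1)}"
            using i(2) by (cases "even i") (auto elim!: evenE oddE)
          ultimately show ?thesis using P_def F2_def by blast
        next
          case False
          then obtain y where y: "y \<in> D" "x = \<sigma> y" using x by blast
          have "y \<notin> Orb" using Ocl y False by blast
          then have "x \<in> D' \<inter> \<sigma> ` D'" using x y D'_def False by blast
          then show ?thesis using F(3) F2_def by blast
        qed
      qed
      have "(2*k+1) * card F2 \<le> (2*k+1) * (card F + (L+1) div 2)" by (rule mult_le_mono2[OF cF2])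
      also have "\<dots> = (2*k+1) * card F + (2*k+1) * ((L+1) div 2)" by (simp add: algebra_simps)
      also have "\<dots> \<le> (k+1) * card D' + (k+1) * L" by (rule add_le_mono[OF F(4) arith_cyc[OF Lcond]])
      also have "\<dots> = (k+1) * card D" using cD by (simp add: algebra_simps)
      finally have bnd: "(2*k+1) * card F2 \<le> (k+1) * card D" .
      have F2E: "F2 \<subseteq> E" using F(1) PE F2_def by blast
      show ?thesis using F2E fF2 cov bnd by blast
    qed
  qed
qed


lemma degree_count:
  assumes fV: "finite V" and sgE: "\<forall>e\<in>E. \<exists>u v. e = {u, v} \<and> u \<noteq> v \<and> u \<in> V \<and> v \<in> V"
  shows "card {u\<in>V. {v, u} \<in> E} = degree E v"
proof -
  have "bij_betw (\<lambda>u. {v, u}) {u\<in>V. {v, u} \<in> E} {e\<in>E. v \<in> e}"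
  proof (rule bij_betwI')
    fix x y assume "x \<in> {u\<in>V. {v, u} \<in> E}" "y \<in> {u\<in>V. {v, u} \<in> E}"
    show "({v, x} = {v, y}) = (x = y)" by (metis doubleton_eq_iff)
  next
    fix x assume "x \<in> {u\<in>V. {v, u} \<in> E}"
    then show "{v, x} \<in> {e\<in>E. v \<in> e}" by simp
  next
    fix e assume e: "e \<in> {e\<in>E. v \<in> e}"
    then obtain a b where ab: "e = {a, b}" "a \<in> V" "b \<in> V" using sgE by blast
    show "\<exists>x\<in>{u\<in>V. {v, u} \<in> E}. e = {v, x}"
    proof (cases "v = a")
      case True then show ?thesis using ab e by auto
    next
      case False then have "v = b" using ab e by auto
      then show ?thesis using ab e by (intro bexI[of _ a]) (auto simp: insert_commute)
    qed
  qed
  then show ?thesis unfolding degree_def by (rule bij_betw_same_card)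
qed

lemma part1:
  fixes V :: "'a set" and E :: "'a set set"
  assumes fV: "finite V" and sgE: "\<forall>e\<in>E. \<exists>u v. e = {u, v} \<and> u \<noteq> v \<and> u \<in> V \<and> v \<in> V"
    and dpos: "\<Delta> > 0" and dle: "\<forall>v\<in>V. degree E v \<le> \<Delta>"
  shows "\<exists>D \<sigma>. D \<subseteq> V \<and> inj_on \<sigma> D \<and> (\<forall>v\<in>D. {v, \<sigma> v} \<in> E) \<and>
           (\<forall>v\<in>V. degree E v = \<Delta> \<longrightarrow> v \<in> D \<and> v \<in> \<sigma> ` D)"
proof -
  define A where "A = V \<times> (UNIV :: bool set)"
  define w where "w = (\<lambda>p q :: 'a \<times> bool. if snd p = snd q then (if {fst p, fst q} \<in> E then 1 else 0)
                      else (if fst p = fst q then \<Delta> - degree E (fst p) else 0 :: nat))"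
  have fA: "finite A" using fV A_def by simp
  have wsym: "\<And>p q. w p q = w q p" unfolding w_def by (auto simp: insert_commute)
  have row: "\<forall>x\<in>A. (\<Sum>y\<in>A. w x y) = \<Delta>"
  proof
    fix x assume "x \<in> A"
    then obtain v i where x: "x = (v, i)" "v \<in> V" using A_def by auto
    have "(\<Sum>y\<in>A. w x y) = (\<Sum>u\<in>V. \<Sum>j\<in>(UNIV::bool set). w x (u, j))"
      unfolding A_def by (simp add: sum.cartesian_product)
    also have "\<dots> = (\<Sum>u\<in>V. (if {v, u} \<in> E then 1 else 0) + (if v = u then \<Delta> - degree E v else 0))"
    proof (rule sum.cong[OF refl])
      fix u assume "u \<in> V"
      have "(\<Sum>j\<in>(UNIV::bool set). w x (u, j)) = w x (u, True) + w x (u, False)"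
        by (simp add: UNIV_bool)
      then show "(\<Sum>j\<in>(UNIV::bool set). w x (u, j)) = (if {v, u} \<in> E then 1 else 0) + (if v = u then \<Delta> - degree E v else 0)"
        using x by (cases i) (auto simp: w_def)
    qed
    also have "\<dots> = (\<Sum>u\<in>V. (if {v, u} \<in> E then 1 else 0)) + (\<Sum>u\<in>V. (if v = u then \<Delta> - degree E v else 0))"
      by (rule sum.distrib)
    also have "(\<Sum>u\<in>V. (if {v, u} \<in> E then 1 else 0)) = card {u\<in>V. {v, u} \<in> E}"
      using fV by (simp add: sum.inter_filter[symmetric])
    also have "\<dots> = degree E v" by (rule degree_count[OF fV sgE])
    also have "(\<Sum>u\<in>V. (if v = u then \<Delta> - degree E v else 0)) = \<Delta> - degree E v"
      using fV x(2) by (simp add: sum.delta)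
    finally show "(\<Sum>y\<in>A. w x y) = \<Delta>" using dle x(2) by simp
  qed
  have col: "\<forall>y\<in>A. (\<Sum>x\<in>A. w x y) \<le> \<Delta>"
    using row wsym by simp
  obtain f where f: "inj_on f A" "\<forall>x\<in>A. f x \<in> A \<and> w x (f x) > 0"
    using regular_match[OF fA dpos row col] by blast
  have fAA: "f ` A = A"
  proof -
    have "f ` A \<subseteq> A" using f(2) by auto
    moreover have "card (f ` A) = card A" using f(1) by (simp add: card_image)
    ultimately show ?thesis using fA by (simp add: card_subset_eq)
  qed
  define D where "D = {v\<in>V. snd (f (v, True))}"
  define \<sigma> where "\<sigma> = (\<lambda>v. fst (f (v, True)))"
  have DV: "D \<subseteq> V" using D_def by auto
  have fD: "\<And>v. v \<in> D \<Longrightarrow> f (v, True) = (\<sigma> v, True)" using D_def \<sigma>_def by (simp add: prod_eq_iff)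
  have injs: "inj_on \<sigma> D"
  proof (rule inj_onI)
    fix a b assume a: "a \<in> D" and b: "b \<in> D" and e: "\<sigma> a = \<sigma> b"
    have "f (a, True) = f (b, True)" using fD[OF a] fD[OF b] e by simp
    moreover have "(a, True) \<in> A" "(b, True) \<in> A" using a b DV A_def by auto
    ultimately show "a = b" using f(1) by (auto dest: inj_onD)
  qed
  have edges: "\<forall>v\<in>D. {v, \<sigma> v} \<in> E"
  proof
    fix v assume v: "v \<in> D"
    have "(v, True) \<in> A" using v DV A_def by auto
    then have "w (v, True) (f (v, True)) > 0" using f(2) by blast
    then show "{v, \<sigma> v} \<in> E" using fD[OF v] by (simp add: w_def split: if_splits)
  qed
  have S: "\<forall>v\<in>V. degree E v = \<Delta> \<longrightarrow> v \<in> D \<and> v \<in> \<sigma> ` D"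
  proof (intro ballI impI)
    fix v assume v: "v \<in> V" and dv: "degree E v = \<Delta>"
    have vA: "(v, True) \<in> A" using v A_def by auto
    then have "w (v, True) (f (v, True)) > 0" using f(2) by blast
    then have "snd (f (v, True))" using dv by (auto simp: w_def split: if_splits)
    then have vD: "v \<in> D" using v D_def by simp
    obtain p where p: "p \<in> A" "f p = (v, True)" using vA fAA by (metis imageE)
    obtain u j where uj: "p = (u, j)" by (cases p)
    have "w p (v, True) > 0" using f(2) p by metis
    then have j: "j" using uj dv by (auto simp: w_def split: if_splits)
    then have "u \<in> D" "\<sigma> u = v" using p uj D_def \<sigma>_def A_def by auto
    then show "v \<in> D \<and> v \<in> \<sigma> ` D" using vD by blast
  qed
  show ?thesis using DV injs edges S by blast
qed

lemma part3:
  fixes V :: "'a set" and E :: "'a set set"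
  assumes fV: "finite V" and fE: "finite E" and Vne: "V \<noteq> {}"
    and dpos: "max_degree V E > 0"
    and FE: "F \<subseteq> E" and cov: "\<forall>v\<in>V. degree E v = max_degree V E \<longrightarrow> (\<exists>e\<in>F. v \<in> e)"
  shows "es_Delta V E \<le> card F"
proof -
  define \<Delta> where "\<Delta> = max_degree V E"
  have Dm: "\<Delta> = Max (degree E ` V)" unfolding \<Delta>_def max_degree_def using Vne by simp
  have dle: "\<And>v. v \<in> V \<Longrightarrow> degree E v \<le> \<Delta>" using Dm fV by simp
  have finF: "finite F" using FE fE finite_subset by blast
  define S where "S = {v\<in>V. degree E v = \<Delta>}"
  define P where "P = (\<lambda>G. G \<subseteq> F \<and> (\<forall>v\<in>S. \<exists>e\<in>G. v \<in> e))"
  have PF: "P F" using cov S_def \<Delta>_def P_def by auto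
  obtain F0 where F0: "P F0" "\<forall>G. P G \<longrightarrow> card F0 \<le> card G"
    using ex_has_least_nat[of P F card, OF PF] by blast
  have F0F: "F0 \<subseteq> F" and F0cov: "\<forall>v\<in>S. \<exists>e\<in>F0. v \<in> e" using F0(1) P_def by auto
  have fF0: "finite F0" using F0F finF finite_subset by blast
  have fEv: "\<And>v. finite {e\<in>E. v \<in> e}" using fE by simp
  have up: "\<forall>y\<in>degree (E - F0) ` V. y \<le> \<Delta> - 1"
  proof
    fix y assume "y \<in> degree (E - F0) ` V"
    then obtain v where v: "v \<in> V" "y = degree (E - F0) v" by blast
    show "y \<le> \<Delta> - 1"
    proof (cases "v \<in> S")
      case True
      then obtain e where e: "e \<in> F0" "v \<in> e" using F0cov by blast
      have eE: "e \<in> E" using e F0F FE by blast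
      have "{e'\<in>E - F0. v \<in> e'} \<subseteq> {e'\<in>E. v \<in> e'} - {e}" using e by auto
      then have "y \<le> card ({e'\<in>E. v \<in> e'} - {e})" using v fEv unfolding degree_def
        by (meson card_mono finite_Diff)
      also have "\<dots> = card {e'\<in>E. v \<in> e'} - 1" using e eE fEv by (simp add: card_Diff_singleton)
      also have "\<dots> = \<Delta> - 1" using True unfolding S_def degree_def by simp
      finally show ?thesis .
    next
      case False
      then have "degree E v < \<Delta>" using dle[OF v(1)] S_def v(1) by fastforce
      moreover have "y \<le> degree E v" unfolding v(2) degree_def
        by (rule card_mono[OF fEv]) auto
      ultimately show ?thesis by simp
    qed
  qed
  have att: "\<Delta> - 1 \<in> degree (E - F0) ` V"
  proof -
    have "\<Delta> \<in> degree E ` V" using Dm fV Vne by simp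
    then obtain s where s: "s \<in> S" using S_def by auto
    then obtain e where e: "e \<in> F0" "s \<in> e" using F0cov by blast
    have "card (F0 - {e}) < card F0" by (rule card_Diff1_less[OF fF0 e(1)])
    then have "\<not> P (F0 - {e})" using F0(2) by (meson not_le)
    then obtain x where x: "x \<in> S" "\<forall>e'\<in>F0 - {e}. x \<notin> e'" using P_def F0F by auto
    obtain e' where e': "e' \<in> F0" "x \<in> e'" using F0cov x(1) by blast
    have ee: "e' = e" using e' x(2) by blast
    have eE: "e \<in> E" using e F0F FE by blast
    have "{e''\<in>E - F0. x \<in> e''} = {e''\<in>E. x \<in> e''} - {e}" using x(2) e' ee eE e(1) by auto
    then have "degree (E - F0) x = card {e''\<in>E. x \<in> e''} - 1"
      unfolding degree_def using e' ee eE fEv by (simp add: card_Diff_singleton)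
    also have "\<dots> = \<Delta> - 1" using x(1) unfolding S_def degree_def by simp
    finally show ?thesis using x(1) S_def by force
  qed
  have "max_degree V (E - F0) = Max (degree (E - F0) ` V)" unfolding max_degree_def using Vne by simp
  also have "\<dots> = \<Delta> - 1" using up att fV by (intro Max_eqI) auto
  finally have md: "max_degree V (E - F0) = max_degree V E - 1" using \<Delta>_def by simp
  have F0E: "F0 \<subseteq> E" using F0F FE by blast
  have fin: "finite {card G | G. G \<subseteq> E \<and> max_degree V (E - G) = max_degree V E - 1}"
  proof -
    have "{card G | G. G \<subseteq> E \<and> max_degree V (E - G) = max_degree V E - 1} \<subseteq> card ` Pow E" by auto
    then show ?thesis by (rule finite_subset) (simp add: fE)
  qed
  have mem: "card F0 \<in> {card G | G. G \<subseteq> E \<and> max_degree V (E - G) = max_degree V E - 1}"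
    using md F0E by blast
  have "es_Delta V E \<le> card F0" unfolding es_Delta_def by (rule Min_le[OF fin mem])
  also have "\<dots> \<le> card F" by (rule card_mono[OF finF F0F])
  finally show ?thesis .
qed


theorem theorem3p3:
  fixes V :: "'a set" and E :: "'a set set" and k :: nat
  assumes "simple_graph V E"
    and "k \<ge> 1"
    and "has_odd_cycle E"
    and "odd_girth E = 2 * k + 1"
  shows "real (es_Delta V E) \<le> (real k + 1) / (2 * real k + 1) * real (card V)"
proof -
  have sg0: "finite V \<and> (\<forall>e\<in>E. \<exists>u v. e = {u, v} \<and> u \<noteq> v \<and> u \<in> V \<and> v \<in> V)"
    using assms(1) unfolding simple_graph_def .
  then have fV: "finite V" and sgE: "\<forall>e\<in>E. \<exists>u v. e = {u, v} \<and> u \<noteq> v \<and> u \<in> V \<and> v \<in> V"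
    by simp_all
  have sg: "\<forall>e\<in>E. \<exists>u v. e = {u, v} \<and> u \<noteq> v"
  proof
    fix e assume "e \<in> E"
    then obtain u v where "e = {u, v}" "u \<noteq> v" using sgE by meson
    then show "\<exists>u v. e = {u, v} \<and> u \<noteq> v" by blast
  qed
  have EP: "E \<subseteq> Pow V"
  proof
    fix e assume "e \<in> E"
    then obtain u v where "e = {u, v}" "u \<in> V" "v \<in> V" using sgE by meson
    then show "e \<in> Pow V" by simp
  qed
  have fE: "finite E" by (rule finite_subset[OF EP]) (simp add: fV)
  have og: "\<forall>cs. is_cycle E cs \<and> odd (length cs) \<longrightarrow> 2*k+1 \<le> length cs"
  proof (intro allI impI)
    fix cs assume "is_cycle E cs \<and> odd (length cs)"
    then have "odd_girth E \<le> length cs" unfolding odd_girth_def by (intro Least_le) blast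
    then show "2*k+1 \<le> length cs" using assms(4) by simp
  qed
  obtain cs where cs: "is_cycle E cs" using assms(3) unfolding has_odd_cycle_def by blast
  then have c3: "3 \<le> length cs" and call: "\<forall>i < length cs. {cs ! i, cs ! ((i + 1) mod length cs)} \<in> E"
    unfolding is_cycle_def by blast+
  have "0 < length cs" using c3 by linarith
  then have "{cs ! 0, cs ! ((0 + 1) mod length cs)} \<in> E" using call by blast
  then obtain e where eE: "e \<in> E" by blast
  then obtain a b where ab: "e = {a, b}" "a \<in> V" using sgE by meson
  have Vne: "V \<noteq> {}" using ab by blast
  define \<Delta> where "\<Delta> = max_degree V E"
  have Dm: "\<Delta> = Max (degree E ` V)" unfolding \<Delta>_def max_degree_def using Vne by simp
  have dle: "\<forall>v\<in>V. degree E v \<le> \<Delta>" using Dm fV by simp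
  have "degree E a \<ge> 1"
  proof -
    have "e \<in> {e\<in>E. a \<in> e}" using eE ab by simp
    moreover have "finite {e\<in>E. a \<in> e}" using fE by simp
    ultimately have "card {e\<in>E. a \<in> e} \<noteq> 0" by (metis card_0_eq empty_iff)
    then show ?thesis unfolding degree_def by simp
  qed
  then have dpos: "\<Delta> > 0" using dle ab(2) by fastforce
  obtain D \<sigma> where D: "D \<subseteq> V" "inj_on \<sigma> D" "\<forall>v\<in>D. {v, \<sigma> v} \<in> E"
    "\<forall>v\<in>V. degree E v = \<Delta> \<longrightarrow> v \<in> D \<and> v \<in> \<sigma> ` D"
    using part1[OF fV sgE dpos dle] by blast
  have fD: "finite D" using D(1) fV finite_subset by blast
  obtain F where F: "F \<subseteq> E" "finite F" "\<forall>x\<in>D \<inter> \<sigma> ` D. \<exists>e\<in>F. x \<in> e"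
    "(2*k+1) * card F \<le> (k+1) * card D"
    using cover_from_inj[OF sg og fD D(2) D(3)] by blast
  have cov: "\<forall>v\<in>V. degree E v = max_degree V E \<longrightarrow> (\<exists>e\<in>F. v \<in> e)"
    using D(4) F(3) \<Delta>_def by blast
  have es: "es_Delta V E \<le> card F"
    by (rule part3[OF fV fE Vne _ F(1) cov]) (use dpos \<Delta>_def in simp)
  have "card D \<le> card V" by (rule card_mono[OF fV D(1)])
  then have "(2*k+1) * es_Delta V E \<le> (k+1) * card V"
    using F(4) es by (meson mult_le_mono2 order_trans)
  then have r: "real ((2*k+1) * es_Delta V E) \<le> real ((k+1) * card V)" by (rule of_nat_mono)
  have pos: "(2 * real k + 1) > 0" by simp
  have "real (es_Delta V E) \<le> (real k + 1) * real (card V) / (2 * real k + 1)"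
    using r pos by (simp add: pos_le_divide_eq algebra_simps)
  then show ?thesis by simp
qed

end
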